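(* Let $m\ge 2$ and let $e_1=(1,0)$, $e_2=(0,1)$ be the standard generating set of $\mathbb{Z}\times\mathbb{Z}_m$. Then $\mathrm{Cay}(\mathbb{Z}\times\mathbb{Z}_m;e_1,e_2)$ has two arc-disjoint two-way infinite hamiltonian paths if and only if $m=2$.
   Context: The Cayley digraph $\mathrm{Cay}(G;a,b)$ has vertex set $G$ and an arc from $v$ to $v+s$ for all $v\in G$, $s\in\{a,b\}$. A two-way infinite hamiltonian path is a doubly-infinite sequence $\ldots,v_{-1},v_0,v_1,\ldots$ listing every vertex exactly once with an arc from $v_i$ to $v_{i+1}$ for all $i\in\mathbb{Z}$. Arc-disjoint means sharing no arc. *)

theory Defs
  imports Main
begin

definition ZZm :: "nat \<Rightarrow> (int \<times> int) set" where
  "ZZm m = {(x, y). 0 \<le> y \<and> y < int m}"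

definition add_ZZm :: "nat \<Rightarrow> int \<times> int \<Rightarrow> int \<times> int \<Rightarrow> int \<times> int" where
  "add_ZZm m u s = (fst u + fst s, (snd u + snd s) mod int m)"

definition e1 :: "int \<times> int" where "e1 = (1, 0)"
definition e2 :: "int \<times> int" where "e2 = (0, 1)"

definition cay_arc :: "nat \<Rightarrow> int \<times> int \<Rightarrow> int \<times> int \<Rightarrow> bool" where
  "cay_arc m u v \<longleftrightarrow> u \<in> ZZm m \<and> (v = add_ZZm m u e1 \<or> v = add_ZZm m u e2)"

definition two_way_ham_path :: "nat \<Rightarrow> (int \<Rightarrow> int \<times> int) \<Rightarrow> bool" where
  "two_way_ham_path m f \<longleftrightarrow> bij_betw f UNIV (ZZm m) \<and> (\<forall>i. cay_arc m (f i) (f (i + 1)))"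

definition path_arcs :: "(int \<Rightarrow> int \<times> int) \<Rightarrow> ((int \<times> int) \<times> (int \<times> int)) set" where
  "path_arcs f = {(f i, f (i + 1)) | i. True}"

definition arc_disjoint :: "(int \<Rightarrow> int \<times> int) \<Rightarrow> (int \<Rightarrow> int \<times> int) \<Rightarrow> bool" where
  "arc_disjoint f g \<longleftrightarrow> path_arcs f \<inter> path_arcs g = {}"

end

theory Submission
  imports Defs
begin


lemma par: obtains k where "(i::int) = 2*k" | k where "i = 2*k+1"
  by (metis dvd_def odd_two_times_div_two_succ)

definition fz :: "int \<Rightarrow> int \<times> int" where
  "fz i = (i div 2, (i div 2 + i mod 2) mod 2)"
definition gz :: "int \<Rightarrow> int \<times> int" where
  "gz i = (i div 2, (i div 2 + i mod 2 + 1) mod 2)"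

lemma fz0: "fz (2*k) = (k, k mod 2)" by (simp add: fz_def)
lemma fz1: "fz (2*k+1) = (k, (k+1) mod 2)" by (simp add: fz_def)
lemma gz0: "gz (2*k) = (k, (k+1) mod 2)" by (simp add: gz_def)
lemma gz1: "gz (2*k+1) = (k, k mod 2)"
proof -
  have "gz (2*k+1) = (k, (k+1+1) mod 2)" by (simp add: gz_def)
  also have "(k+1+1) mod 2 = k mod 2" by presburger
  finally show ?thesis .
qed
lemma m2c: "((k::int)+1) mod 2 = 1 - k mod 2" by presburger
lemma m2d: "(k::int) mod 2 = 0 \<or> k mod 2 = 1" by presburger
lemma sh: "2*(k::int)+1+1 = 2*(k+1)" by simp

lemma fz_ham: "two_way_ham_path 2 fz"
proof -
  have inj: "inj fz"
  proof (rule injI)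
    fix i j assume e: "fz i = fz j"
    show "i = j"
      by (rule par[of i]; rule par[of j]; insert e; auto simp: fz0 fz1 m2c; presburger)
  qed
  have "fz ` UNIV = ZZm 2"
  proof
    show "fz ` UNIV \<subseteq> ZZm 2" by (auto simp: fz_def ZZm_def)
    show "ZZm 2 \<subseteq> fz ` UNIV"
    proof
      fix v assume "v \<in> ZZm 2"
      then obtain x y where v: "v = (x,y)" "0 \<le> y" "y < 2" by (cases v) (auto simp: ZZm_def)
      have "y = x mod 2 \<or> y = (x+1) mod 2" using v m2d[of x] by (auto simp: m2c)
      then show "v \<in> range fz" using v fz0[of x] fz1[of x] by (metis rangeI)
    qed
  qed
  moreover have "cay_arc 2 (fz i) (fz (i+1))" for i
  proof (rule par[of i])
    fix k assume "i = 2*k"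
    then show ?thesis by (simp add: fz0 fz1 cay_arc_def ZZm_def add_ZZm_def e2_def mod_simps)
  next
    fix k assume "i = 2*k+1"
    then have "i + 1 = 2*(k+1)" by simp
    then have "fz (i+1) = fz (2*(k+1))" by (rule arg_cong)
    then show ?thesis using fz0[of "k+1"] \<open>i = 2*k+1\<close>
      by (simp add: fz1 cay_arc_def ZZm_def add_ZZm_def e1_def)
  qed
  ultimately show ?thesis using inj by (simp add: two_way_ham_path_def bij_betw_def)
qed

lemma gz_ham: "two_way_ham_path 2 gz"
proof -
  have inj: "inj gz"
  proof (rule injI)
    fix i j assume e: "gz i = gz j"
    show "i = j"
      by (rule par[of i]; rule par[of j]; insert e; auto simp: gz0 gz1 m2c; presburger)
  qed
  have "gz ` UNIV = ZZm 2"
  proof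
    show "gz ` UNIV \<subseteq> ZZm 2" by (auto simp: gz_def ZZm_def)
    show "ZZm 2 \<subseteq> gz ` UNIV"
    proof
      fix v assume "v \<in> ZZm 2"
      then obtain x y where v: "v = (x,y)" "0 \<le> y" "y < 2" by (cases v) (auto simp: ZZm_def)
      have "y = x mod 2 \<or> y = (x+1) mod 2" using v m2d[of x] by (auto simp: m2c)
      then show "v \<in> range gz" using v gz0[of x] gz1[of x] by (metis rangeI)
    qed
  qed
  moreover have "cay_arc 2 (gz i) (gz (i+1))" for i
  proof (rule par[of i])
    fix k assume "i = 2*k"
    then show ?thesis by (simp add: gz0 gz1 cay_arc_def ZZm_def add_ZZm_def e2_def mod_simps)
  next
    fix k assume "i = 2*k+1"
    then have "i + 1 = 2*(k+1)" by simp
    then have "gz (i+1) = gz (2*(k+1))" by (rule arg_cong)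
    then show ?thesis using gz0[of "k+1"] \<open>i = 2*k+1\<close>
      by (simp add: gz1 cay_arc_def ZZm_def add_ZZm_def e1_def)
  qed
  ultimately show ?thesis using inj by (simp add: two_way_ham_path_def bij_betw_def)
qed

lemma fzE: "i = 2*k \<Longrightarrow> fz i = (k, k mod 2) \<and> fz (i+1) = (k, (k+1) mod 2)"
  using fz0 fz1 by simp
lemma gzE: "i = 2*k \<Longrightarrow> gz i = (k, (k+1) mod 2) \<and> gz (i+1) = (k, k mod 2)"
  using gz0 gz1 by simp
lemma fzO: "i = 2*k+1 \<Longrightarrow> fz i = (k, (k+1) mod 2) \<and> fz (i+1) = (k+1, (k+1) mod 2)"
proof -
  assume a: "i = 2*k+1"
  then have "i + 1 = 2*(k+1)" by simp
  then have "fz (i+1) = fz (2*(k+1))" by (rule arg_cong)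
  then show ?thesis using a fz0[of "k+1"] fz1[of k] by simp
qed
lemma gzO: "i = 2*k+1 \<Longrightarrow> gz i = (k, k mod 2) \<and> gz (i+1) = (k+1, (k+2) mod 2)"
proof -
  assume a: "i = 2*k+1"
  then have "i + 1 = 2*(k+1)" by simp
  then have "gz (i+1) = gz (2*(k+1))" by (rule arg_cong)
  then show ?thesis using a gz0[of "k+1"] gz1[of k] by (simp add: ac_simps)
qed

lemma fg_disj: "arc_disjoint fz gz"
proof (rule ccontr)
  assume "\<not> ?thesis"
  then obtain p where "p \<in> path_arcs fz" "p \<in> path_arcs gz" unfolding arc_disjoint_def by blast
  then obtain i j where "p = (fz i, fz (i+1))" "p = (gz j, gz (j+1))" unfolding path_arcs_def by blast
  then have e: "fz i = gz j" "fz (i+1) = gz (j+1)" by simp_all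
  show False
  proof (rule par[of i]; rule par[of j])
    fix k l assume "i = 2*k" "j = 2*l"
    then show False using e fzE[of i k] gzE[of j l] by (simp; presburger)
  next
    fix k l assume "i = 2*k" "j = 2*l+1"
    then show False using e fzE[of i k] gzO[of j l] by (simp; presburger)
  next
    fix k l assume "i = 2*k+1" "j = 2*l"
    then show False using e fzO[of i k] gzE[of j l] by (simp; presburger)
  next
    fix k l assume "i = 2*k+1" "j = 2*l+1"
    then show False using e fzO[of i k] gzO[of j l] by (simp; presburger)
  qed
qed

lemma ham_in: "two_way_ham_path m f \<Longrightarrow> f i \<in> ZZm m"
  unfolding two_way_ham_path_def by (metis bij_betw_apply UNIV_I)

lemma core:
  assumes h: "two_way_ham_path m f" and m: "m \<ge> 1"
  and st: "\<And>i. f (i+1) = (if C (f i) then add_ZZm m (f i) e1 else add_ZZm m (f i) e2)"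
  and r: "0 \<le> r1" "r1 < int m" "0 \<le> r2" "r2 < int m" "r1 \<noteq> r2"
  and Cr: "\<And>v. v \<in> ZZm m \<Longrightarrow> (fst v + snd v) mod int m = r1 \<or> (fst v + snd v) mod int m = r2 \<Longrightarrow> C v"
  shows False
proof -
  define X where "X i = fst (f i)" for i
  have Xs: "X (i+1) = X i + (if C (f i) then 1 else 0)" for i
    using st[of i] by (simp add: X_def add_ZZm_def e1_def e2_def)
  have mono: "X i \<le> X (i + int n)" for i n
  proof (induction n)
    case 0 then show ?case by simp
  next
    case (Suc n)
    have "X (i + int (Suc n)) = X (i + int n + 1)" by (simp add: algebra_simps)
    then show ?case using Xs[of "i + int n"] Suc by simp
  qed
  have monoi: "X i \<le> X j" if "i \<le> j" for i j
    using mono[of i "nat (j - i)"] that by simp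
  define phi where "phi i = (fst (f i) + snd (f i)) mod int m" for i
  have phs: "phi (i+1) = (phi i + 1) mod int m" for i
  proof -
    have sm: "snd (f i) mod int m = snd (f i)" using ham_in[OF h, of i] by (auto simp: ZZm_def)
    have e: "phi (i+1) = (fst (f i) + snd (f i) + 1) mod int m"
    proof (cases "C (f i)")
      case True
      then have "f (i+1) = (fst (f i) + 1, snd (f i))" using st[of i] sm by (simp add: add_ZZm_def e1_def)
      then show ?thesis by (simp add: phi_def ac_simps)
    next
      case False
      then have "f (i+1) = (fst (f i), (snd (f i) + 1) mod int m)" using st[of i] by (simp add: add_ZZm_def e2_def)
      then have "phi (i+1) = (fst (f i) + (snd (f i) + 1) mod int m) mod int m" by (simp add: phi_def)
      also have "\<dots> = (fst (f i) + (snd (f i) + 1)) mod int m" by (rule mod_add_right_eq)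
      finally show ?thesis by (simp add: ac_simps)
    qed
    have "(phi i + 1) mod int m = (fst (f i) + snd (f i) + 1) mod int m"
      unfolding phi_def by (rule mod_add_left_eq)
    then show ?thesis using e by simp
  qed
  have phn: "phi (i + int n) = (phi i + int n) mod int m" for i n
  proof (induction n)
    case 0 then show ?case by (simp add: phi_def)
  next
    case (Suc n)
    have "phi (i + int (Suc n)) = phi (i + int n + 1)" by (simp add: algebra_simps)
    also have "\<dots> = (phi (i + int n) + 1) mod int m" by (rule phs)
    also have "\<dots> = ((phi i + int n) mod int m + 1) mod int m" using Suc by simp
    also have "\<dots> = (phi i + int n + 1) mod int m" by (rule mod_add_left_eq)
    also have "\<dots> = (phi i + int (Suc n)) mod int m" by (simp add: ac_simps)
    finally show ?case .
  qed
  have jump: "X i + 1 \<le> X (i+1)" if "phi i = r1 \<or> phi i = r2" for i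
  proof -
    have "C (f i)" using Cr[OF ham_in[OF h, of i]] that unfolding phi_def by blast
    then show ?thesis using Xs[of i] by simp
  qed
  have gen: "X i + 2 \<le> X (i + int m)" if "a < b" "0 \<le> a" "b < int m"
     "phi (i+a) = r1 \<or> phi (i+a) = r2" "phi (i+b) = r1 \<or> phi (i+b) = r2" for i a b
  proof -
    have "X i \<le> X (i+a)" by (rule monoi) (use that in linarith)
    moreover have "X (i+a) + 1 \<le> X (i+a+1)" by (rule jump[OF that(4)])
    moreover have "X (i+a+1) \<le> X (i+b)" by (rule monoi) (use that in linarith)
    moreover have "X (i+b) + 1 \<le> X (i+b+1)" by (rule jump[OF that(5)])
    moreover have "X (i+b+1) \<le> X (i + int m)" by (rule monoi) (use that in linarith)
    ultimately show ?thesis by linarith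
  qed
  have two: "X i + 2 \<le> X (i + int m)" for i
  proof -
    define k1 where "k1 = (r1 - phi i) mod int m"
    define k2 where "k2 = (r2 - phi i) mod int m"
    have k: "0 \<le> k1" "k1 < int m" "0 \<le> k2" "k2 < int m" using m by (auto simp: k1_def k2_def)
    have p1: "phi (i + k1) = r1"
    proof -
      have "phi (i + k1) = (phi i + k1) mod int m" using phn[of i "nat k1"] k by simp
      also have "\<dots> = (phi i + (r1 - phi i)) mod int m" unfolding k1_def by (rule mod_add_right_eq)
      finally show ?thesis using r by simp
    qed
    have p2: "phi (i + k2) = r2"
    proof -
      have "phi (i + k2) = (phi i + k2) mod int m" using phn[of i "nat k2"] k by simp
      also have "\<dots> = (phi i + (r2 - phi i)) mod int m" unfolding k2_def by (rule mod_add_right_eq)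
      finally show ?thesis using r by simp
    qed
    have "k1 \<noteq> k2" using p1 p2 r by auto
    then consider "k1 < k2" | "k2 < k1" by linarith
    then show ?thesis
    proof cases
      case 1 then show ?thesis using gen[of k1 k2 i] k p1 p2 by simp
    next
      case 2 then show ?thesis using gen[of k2 k1 i] k p1 p2 by simp
    qed
  qed
  have rng: "range f = ZZm m" using h unfolding two_way_ham_path_def bij_betw_def by blast
  have "(0,0) \<in> range f" using m rng by (simp add: ZZm_def)
  then obtain i0 where i0: "f i0 = (0,0)" by (metis rangeE)
  have "(1, int m - 1) \<in> range f" using m rng by (simp add: ZZm_def)
  then obtain j where j: "f j = (1, int m - 1)" by (metis rangeE)
  have X0: "X i0 = 0" "X j = 1" using i0 j by (auto simp: X_def)
  have P0: "phi i0 = 0" "phi j = 0" using i0 j by (auto simp: phi_def)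
  show False
  proof (cases "j \<le> i0")
    case True then show ?thesis using monoi[OF True] X0 by simp
  next
    case False
    define n where "n = nat (j - i0)"
    have jn: "j = i0 + int n" using False by (simp add: n_def)
    have "int n mod int m = 0" using phn[of i0 n] P0 jn by simp
    moreover have "n > 0" using False n_def by simp
    ultimately have "int m \<le> int n" using zdvd_imp_le[of "int m" "int n"] by (simp add: dvd_eq_mod_eq_0)
    then have "X (i0 + int m) \<le> X j" by (intro monoi) (simp add: jn)
    then show False using two[of i0] X0 by simp
  qed
qed

lemma getpre: "range f = A \<Longrightarrow> v \<in> A \<Longrightarrow> \<exists>i. v = f i" by auto

lemma three: "\<exists>r1 r2::int. 0 \<le> r1 \<and> r1 \<le> 2 \<and> 0 \<le> r2 \<and> r2 \<le> 2 \<and> r1 \<noteq> r2 \<and> (P r1 \<longleftrightarrow> P r2)"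
proof (cases "P 0 = P 1")
  case True then show ?thesis by (rule_tac x=0 in exI, rule_tac x=1 in exI) simp
next
  case False
  show ?thesis
  proof (cases "P 0 = P 2")
    case True then show ?thesis by (rule_tac x=0 in exI, rule_tac x=2 in exI) simp
  next
    case False2: False
    then show ?thesis using False by (rule_tac x=1 in exI, rule_tac x=2 in exI) auto
  qed
qed

lemma hard:
  assumes m: "m \<ge> 3" and hf: "two_way_ham_path m f" and hg: "two_way_ham_path m g"
    and dj: "arc_disjoint f g"
  shows False
proof -
  have injf: "inj f" and injg: "inj g" using hf hg unfolding two_way_ham_path_def bij_betw_def by auto
  have rf: "range f = ZZm m" and rg: "range g = ZZm m"
    using hf hg unfolding two_way_ham_path_def bij_betw_def by auto
  define sf where "sf v = f (inv f v + 1)" for v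
  define sg where "sg v = g (inv g v + 1)" for v
  have sff: "sf (f i) = f (i+1)" for i using injf by (simp add: sf_def)
  have sgg: "sg (g i) = g (i+1)" for i using injg by (simp add: sg_def)
  have stepf: "sf v = add_ZZm m v e1 \<or> sf v = add_ZZm m v e2" if "v \<in> ZZm m" for v
  proof -
    obtain i where "v = f i" using getpre[OF rf \<open>v \<in> ZZm m\<close>] by blast
    moreover have "cay_arc m (f i) (f (i+1))" using hf unfolding two_way_ham_path_def by blast
    ultimately show ?thesis using sff[of i] unfolding cay_arc_def by simp
  qed
  have stepg: "sg v = add_ZZm m v e1 \<or> sg v = add_ZZm m v e2" if "v \<in> ZZm m" for v
  proof -
    obtain i where "v = g i" using getpre[OF rg \<open>v \<in> ZZm m\<close>] by blast
    moreover have "cay_arc m (g i) (g (i+1))" using hg unfolding two_way_ham_path_def by blast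
    ultimately show ?thesis using sgg[of i] unfolding cay_arc_def by simp
  qed
  have sfinj: "v = w" if "v \<in> ZZm m" "w \<in> ZZm m" "sf v = sf w" for v w
  proof -
    obtain i where i: "v = f i" using getpre[OF rf \<open>v \<in> ZZm m\<close>] by blast
    obtain j where j: "w = f j" using getpre[OF rf \<open>w \<in> ZZm m\<close>] by blast
    have "f (i+1) = f (j+1)" using that sff i j by simp
    then have "i = j" using injf by (simp add: inj_eq)
    then show ?thesis using i j by simp
  qed
  have sginj: "v = w" if "v \<in> ZZm m" "w \<in> ZZm m" "sg v = sg w" for v w
  proof -
    obtain i where i: "v = g i" using getpre[OF rg \<open>v \<in> ZZm m\<close>] by blast
    obtain j where j: "w = g j" using getpre[OF rg \<open>w \<in> ZZm m\<close>] by blast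
    have "g (i+1) = g (j+1)" using that sgg i j by simp
    then have "i = j" using injg by (simp add: inj_eq)
    then show ?thesis using i j by simp
  qed
  have disj: "sf v \<noteq> sg v" if "v \<in> ZZm m" for v
  proof
    assume eq: "sf v = sg v"
    obtain i where i: "v = f i" using getpre[OF rf \<open>v \<in> ZZm m\<close>] by blast
    obtain j where j: "v = g j" using getpre[OF rg \<open>v \<in> ZZm m\<close>] by blast
    have "(v, sf v) \<in> path_arcs f" unfolding path_arcs_def using i sff by auto
    moreover have "(v, sf v) \<in> path_arcs g" unfolding path_arcs_def using j sgg eq by auto
    ultimately show False using dj unfolding arc_disjoint_def by blast
  qed
  have e12: "add_ZZm m v e1 \<noteq> add_ZZm m v e2" for v by (simp add: add_ZZm_def e1_def e2_def)
  define C where "C v = (sf v = add_ZZm m v e1)" for v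
  have Cg: "(sg v = add_ZZm m v e1) = (\<not> C v)" if "v \<in> ZZm m" for v
    using stepf[OF that] stepg[OF that] disj[OF that] e12[of v] unfolding C_def by metis
  have key: "C (x, y) = C (x+1, (y-1) mod int m)" if "0 \<le> y" "y < int m" for x y
  proof -
    define p1 where "p1 = (x, y)"
    define p2 where "p2 = (x+1, (y-1) mod int m)"
    have in1: "p1 \<in> ZZm m" using that by (simp add: p1_def ZZm_def)
    have in2: "p2 \<in> ZZm m" using m by (simp add: p2_def ZZm_def)
    have ne: "p1 \<noteq> p2" by (simp add: p1_def p2_def)
    have a1: "add_ZZm m p1 e1 = (x+1, y)" using that by (simp add: p1_def add_ZZm_def e1_def)
    have a2: "add_ZZm m p2 e2 = (x+1, y)"
    proof -
      have "((y - 1) mod int m + 1) mod int m = (y - 1 + 1) mod int m" by (rule mod_add_left_eq)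
      then show ?thesis using that by (simp add: p2_def add_ZZm_def e2_def)
    qed
    show ?thesis
    proof (rule ccontr)
      assume "C (x, y) \<noteq> C (x + 1, (y - 1) mod int m)"
      then have "C p1 \<noteq> C p2" by (simp add: p1_def p2_def)
      then consider "C p1" "\<not> C p2" | "\<not> C p1" "C p2" by blast
      then show False
      proof cases
        case 1
        have "sf p1 = (x+1, y)" using 1 a1 by (simp add: C_def)
        moreover have "sf p2 = (x+1, y)" using 1 a2 stepf[OF in2] by (simp add: C_def)
        ultimately show False using sfinj[OF in1 in2] ne by simp
      next
        case 2
        have "sg p1 = (x+1, y)" using 2 a1 Cg[OF in1] by simp
        moreover have "sg p2 = (x+1, y)" using 2 a2 Cg[OF in2] stepg[OF in2] by auto
        ultimately show False using sginj[OF in1 in2] ne by simp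
      qed
    qed
  qed
  have diag: "int n < int m \<longrightarrow> C (x, int n) = C (x + int n, 0)" for x n
  proof (induction n arbitrary: x)
    case 0 then show ?case by simp
  next
    case (Suc n)
    show ?case
    proof
      assume lt: "int (Suc n) < int m"
      have "C (x, int (Suc n)) = C (x+1, (int (Suc n) - 1) mod int m)" by (rule key) (use lt in auto)
      also have "\<dots> = C (x+1, int n)" using lt by simp
      also have "\<dots> = C (x + 1 + int n, 0)" using Suc[of "x+1"] lt by simp
      finally show "C (x, int (Suc n)) = C (x + int (Suc n), 0)" by (simp add: ac_simps)
    qed
  qed
  have per: "C (x, 0) = C (x + int m, 0)" for x
  proof -
    have "C (x, 0) = C (x+1, (0-1) mod int m)" by (rule key) (use m in auto)
    also have "(0-1) mod int m = int (m - 1)" using m by (simp add: zmod_zminus1_eq_if)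
    also have "C (x+1, int (m-1)) = C (x + 1 + int (m-1), 0)" using diag[of "m-1" "x+1"] m by simp
    also have "x + 1 + int (m-1) = x + int m" using m by simp
    finally show ?thesis .
  qed
  have pern: "C (x, 0) = C (x + int n * int m, 0)" for x n
  proof (induction n)
    case 0 then show ?case by simp
  next
    case (Suc n)
    have "C (x + int (Suc n) * int m, 0) = C (x + int n * int m + int m, 0)" by (simp add: algebra_simps)
    also have "\<dots> = C (x + int n * int m, 0)" using per[of "x + int n * int m"] by simp
    finally show ?case using Suc by simp
  qed
  have red: "C (x, 0) = C (x mod int m, 0)" for x
  proof (cases "x div int m \<ge> 0")
    case True
    have "x = x mod int m + int (nat (x div int m)) * int m" using True by simp
    then show ?thesis using pern[of "x mod int m" "nat (x div int m)"] by metis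
  next
    case False
    have "x mod int m = x + int (nat (- (x div int m))) * int m" using False
      by (simp add: minus_mult_div_eq_mod[symmetric] algebra_simps)
    then show ?thesis using pern[of x "nat (- (x div int m))"] by metis
  qed
  have Cphi: "C v = C ((fst v + snd v) mod int m, 0)" if "v \<in> ZZm m" for v
  proof -
    obtain x y where v: "v = (x, y)" "0 \<le> y" "y < int m" using \<open>v \<in> ZZm m\<close> by (cases v) (auto simp: ZZm_def)
    have "C (x, y) = C (x + y, 0)" using diag[of "nat y" x] v by simp
    then show ?thesis using red[of "x+y"] v by simp
  qed
  obtain r1 r2 where r: "0 \<le> r1" "r1 \<le> 2" "0 \<le> r2" "r2 \<le> 2" "r1 \<noteq> r2"
    and Pr: "C (r1, 0) = C (r2, 0)" using three[of "\<lambda>r. C (r, 0)"] by blast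
  have rm: "r1 < int m" "r2 < int m" using r m by auto
  have r1m: "r1 mod int m = r1" and r2m: "r2 mod int m = r2" using r rm by auto
  have m1: "m \<ge> 1" using m by simp
  show False
  proof (cases "C (r1, 0)")
    case True
    show False
    proof (rule core[OF hf m1 _ r(1) rm(1) r(3) rm(2) r(5)])
      fix i
      show "f (i+1) = (if C (f i) then add_ZZm m (f i) e1 else add_ZZm m (f i) e2)"
        using stepf[OF ham_in[OF hf]] sff[of i] unfolding C_def by metis
    next
      fix v assume "v \<in> ZZm m" "(fst v + snd v) mod int m = r1 \<or> (fst v + snd v) mod int m = r2"
      then show "C v" using Cphi True Pr r1m r2m by metis
    qed
  next
    case False
    show False
    proof (rule core[OF hg m1 _ r(1) rm(1) r(3) rm(2) r(5), where C="\<lambda>v. sg v = add_ZZm m v e1"])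
      fix i
      show "g (i+1) = (if sg (g i) = add_ZZm m (g i) e1 then add_ZZm m (g i) e1 else add_ZZm m (g i) e2)"
        using stepg[OF ham_in[OF hg]] sgg[of i] by metis
    next
      fix v assume v: "v \<in> ZZm m" "(fst v + snd v) mod int m = r1 \<or> (fst v + snd v) mod int m = r2"
      then have "\<not> C v" using Cphi False Pr r1m r2m by metis
      then show "sg v = add_ZZm m v e1" using Cg[OF v(1)] by simp
    qed
  qed
qed


theorem mainTheorem17:
  fixes m :: nat
  assumes "m \<ge> 2"
  shows "(\<exists>f g. two_way_ham_path m f \<and> two_way_ham_path m g \<and> arc_disjoint f g) \<longleftrightarrow> m = 2"
proof
  assume "\<exists>f g. two_way_ham_path m f \<and> two_way_ham_path m g \<and> arc_disjoint f g"
  then obtain f g where "two_way_ham_path m f" "two_way_ham_path m g" "arc_disjoint f g" by blast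
  then show "m = 2"
  proof (rule_tac ccontr)
    assume "m \<noteq> 2"
    then have "m \<ge> 3" using assms by linarith
    then show False using hard \<open>two_way_ham_path m f\<close> \<open>two_way_ham_path m g\<close> \<open>arc_disjoint f g\<close> by blast
  qed
next
  assume "m = 2"
  then show "\<exists>f g. two_way_ham_path m f \<and> two_way_ham_path m g \<and> arc_disjoint f g"
    using fz_ham gz_ham fg_disj by blast
qed

end
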